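(* Let $\gamma<1$. Then $$\lim_{x\uparrow\infty}\frac{u_0'(x)}{x^{\gamma-1}}=1$$ if and only if the measure $\mu$ satisfies $$b=\frac{1}{1-\gamma}\quad\text{and}\quad \mu\left(\left\{\tfrac{1}{1-\gamma}\right\}\right)=1.$$
   Context: Let $\mu$ be a nonzero finite positive Borel measure on $(0,\infty)$ such that $\int y e^{yz}\mu(dy)<\infty$ for every $z\in\mathbb{R}$. Let $a:=\inf\{y\ge 0:\mu((0,y])>0\}$ and $b:=\inf\{y>0:\mu((y,\infty))=0\}\in(0,\infty]$ be the left and right end points of the support of $\mu$. Define $h(z,t):=\int e^{yz-\frac12 y^2 t}\mu(dy)$ for $(z,t)\in\mathbb{R}\times[0,\infty)$. For each $t$, the map $z\mapsto h(z,t)$ is smooth and strictly increasing with range $(0,\infty)$, and $h$ satisfies $h_t+\frac12 h_{zz}=0$. Let $u:(0,\infty)\times[0,\infty)\to\mathbb{R}$ be smooth, strictly increasing and strictly concave in $x$, solving $u_t=\frac12 u_x^2/u_{xx}$, and related to $h$ by $u_x(h(z,t),t)=e^{-z+t/2}$ for all $(z,t)$. Write $u_0(x):=u(x,0)$, and let $u_0'$ denote its derivative. *)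

theory Defs
  imports "HOL-Analysis.Analysis" "HOL-Probability.Probability"
begin

definition strictly_concave_on :: "real set \<Rightarrow> (real \<Rightarrow> real) \<Rightarrow> bool" where
  "strictly_concave_on S f \<longleftrightarrow>
     (\<forall>x\<in>S. \<forall>y\<in>S. \<forall>s. x \<noteq> y \<and> 0 < s \<and> s < 1 \<longrightarrow>
        (1 - s) * f x + s * f y < f ((1 - s) * x + s * y))"

definition hfun :: "real measure \<Rightarrow> real \<Rightarrow> real \<Rightarrow> real" where
  "hfun \<mu> z t = (\<integral>y. exp (y * z - y\<^sup>2 * t / 2) \<partial>\<mu>)"

text \<open>Right end point b = inf {y > 0. mu((y,oo)) = 0} of the support, in (0, oo];
  the infimum of the empty set is oo.\<close>
definition right_end :: "real measure \<Rightarrow> ereal" where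
  "right_end \<mu> = Inf (ereal ` {y. 0 < y \<and> emeasure \<mu> {y<..} = 0})"

end

theory Submission imports Defs
begin

context
  fixes \<mu> :: "real measure"
  assumes sb: "sets \<mu> = sets borel" and fm: "finite_measure \<mu>"
    and sp: "emeasure \<mu> {..0} = 0"
    and ie: "\<And>z. integrable \<mu> (\<lambda>y. y * exp (y * z))"
begin

lemma meas: assumes "f \<in> borel_measurable borel" shows "f \<in> borel_measurable \<mu>"
  by (metis assms measurable_cong_sets[OF sb refl])

lemma sets_mu[simp]: "A \<in> sets borel \<Longrightarrow> A \<in> sets \<mu>"
  using sb by simp

lemma space_mu: "space \<mu> = UNIV"
  using sets_eq_imp_space_eq[OF sb] by simp

lemma AE_pos: "AE y in \<mu>. 0 < y"
proof (rule AE_I'[of "{..0}"])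
  show "{..0} \<in> null_sets \<mu>" using sp by (simp add: null_sets_def)
  show "{x \<in> space \<mu>. \<not> 0 < x} \<subseteq> {..0}" by auto
qed

lemma integ_exp: "integrable \<mu> (\<lambda>y. exp (y * z))"
proof (rule Bochner_Integration.integrable_bound)
  interpret finite_measure \<mu> by (rule fm)
  show "integrable \<mu> (\<lambda>y. \<bar>y * exp (y * z)\<bar> + exp \<bar>z\<bar>)"
    by (intro Bochner_Integration.integrable_add integrable_abs ie) simp
  show "(\<lambda>y. exp (y * z)) \<in> borel_measurable \<mu>" by (intro meas) measurable
  show "AE y in \<mu>. norm (exp (y * z)) \<le> norm (\<bar>y * exp (y * z)\<bar> + exp \<bar>z\<bar>)"
    using AE_pos
  proof eventually_elim
    case (elim y)
    show ?case
    proof (cases "y \<ge> 1")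
      case True
      then have "exp (y*z) \<le> y * exp (y*z)" by simp
      moreover have "\<bar>y*exp(y*z)\<bar> = y*exp(y*z)" using elim by simp
      moreover have "norm (exp (y*z)) = exp (y*z)" by simp
      moreover have "norm (\<bar>y * exp (y * z)\<bar> + exp \<bar>z\<bar>) = y*exp(y*z) + exp \<bar>z\<bar>"
        using elim by simp
      ultimately show ?thesis using exp_gt_zero[of "\<bar>z\<bar>"] by linarith
    next
      case False
      have "y * z \<le> \<bar>y * z\<bar>" by simp
      also have "\<dots> = y * \<bar>z\<bar>" using elim by (simp add: abs_mult)
      also have "\<dots> \<le> \<bar>z\<bar>" using elim False by (intro mult_left_le_one_le) auto
      finally have "y * z \<le> \<bar>z\<bar>" .
      then have "exp (y*z) \<le> exp \<bar>z\<bar>" by simp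
      moreover have "norm (\<bar>y * exp (y * z)\<bar> + exp \<bar>z\<bar>) = \<bar>y * exp (y * z)\<bar> + exp \<bar>z\<bar>"
        by simp
      moreover have "norm (exp (y*z)) = exp (y*z)" by simp
      ultimately show ?thesis using abs_ge_zero[of "y * exp (y * z)"] by linarith
    qed
  qed
qed

lemma integ_exp2: "integrable \<mu> (\<lambda>y. exp ((y - c) * z))"
proof -
  have "integrable \<mu> (\<lambda>y. exp (y * z) * exp (- c * z))"
    by (intro integrable_mult_left integ_exp)
  moreover have "(\<lambda>y. exp (y * z) * exp (- c * z)) = (\<lambda>y. exp ((y - c) * z))"
    by (auto simp: exp_add[symmetric] algebra_simps)
  ultimately show ?thesis by metis
qed

lemma lim_A:
  assumes "emeasure \<mu> {c<..} = 0"
  shows "((\<lambda>z. \<integral>y. exp ((y - c) * z) \<partial>\<mu>) \<longlongrightarrow> measure \<mu> {c}) at_top"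
proof -
  interpret finite_measure \<mu> by (rule fm)
  have AEc: "AE y in \<mu>. y \<le> c"
  proof (rule AE_I'[of "{c<..}"])
    show "{c<..} \<in> null_sets \<mu>" using assms by (simp add: null_sets_def)
  qed auto
  have "((\<lambda>z. \<integral>y. exp ((y - c) * z) \<partial>\<mu>) \<longlongrightarrow> (\<integral>y. indicator {c} y \<partial>\<mu>)) at_top"
  proof (rule integral_dominated_convergence_at_top[where w="\<lambda>_. 1"])
    show "indicator {c} \<in> borel_measurable \<mu>" by (intro meas) measurable
    show "(\<lambda>y. exp ((y - c) * z)) \<in> borel_measurable \<mu>" for z by (intro meas) measurable
    show "integrable \<mu> (\<lambda>_. 1::real)" by simp
    show "AE y in \<mu>. ((\<lambda>z. exp ((y - c) * z)) \<longlongrightarrow> indicator {c} y) at_top"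
      using AEc
    proof eventually_elim
      case (elim y)
      show ?case
      proof (cases "y = c")
        case True then show ?thesis by simp
      next
        case False
        then have "y - c < 0" using elim by simp
        have "filterlim (\<lambda>z. (y - c) * z) at_bot at_top"
          by (rule filterlim_tendsto_neg_mult_at_bot[OF tendsto_const \<open>y - c < 0\<close> filterlim_ident])
        then have "((\<lambda>z. exp ((y - c) * z)) \<longlongrightarrow> 0) at_top"
          by (rule filterlim_compose[OF exp_at_bot])
        then show ?thesis using False by simp
      qed
    qed
    show "\<forall>\<^sub>F z in at_top. AE y in \<mu>. norm (exp ((y - c) * z)) \<le> 1"
      using eventually_ge_at_top[of "0::real"]
    proof eventually_elim
      case (elim z)
      show ?case using AEc
      proof eventually_elim
        case (elim y)
        then have "(y - c) * z \<le> 0" using \<open>0 \<le> z\<close> by (simp add: mult_nonpos_nonneg)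
        then show ?case by simp
      qed
    qed
  qed
  then show ?thesis by simp
qed

lemma lower:
  assumes "0 < \<delta>" "0 \<le> z"
  shows "exp (\<delta> * z) * measure \<mu> {c + \<delta><..} \<le> (\<integral>y. exp ((y - c) * z) \<partial>\<mu>)"
proof -
  interpret finite_measure \<mu> by (rule fm)
  have "exp (\<delta> * z) * measure \<mu> {c + \<delta><..} = (\<integral>y. indicator {c + \<delta><..} y * exp (\<delta> * z) \<partial>\<mu>)"
    by simp
  also have "\<dots> \<le> (\<integral>y. exp ((y - c) * z) \<partial>\<mu>)"
  proof (rule integral_mono)
    show "integrable \<mu> (\<lambda>y. indicator {c + \<delta><..} y * exp (\<delta> * z))"
      using emeasure_finite by (intro integrable_mult_left integrable_real_indicator) (auto simp: less_top[symmetric])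
    show "integrable \<mu> (\<lambda>y. exp ((y - c) * z))" by (rule integ_exp2)
    fix y
    show "indicator {c + \<delta><..} y * exp (\<delta> * z) \<le> exp ((y - c) * z)"
    proof (cases "y > c + \<delta>")
      case True
      then have "\<delta> * z \<le> (y - c) * z" using assms by (intro mult_right_mono) auto
      then show ?thesis using True by simp
    qed simp
  qed
  finally show ?thesis .
qed

lemma pos_delta:
  assumes "emeasure \<mu> {c<..} \<noteq> 0"
  shows "\<exists>\<delta>>0. measure \<mu> {c + \<delta><..} > 0"
proof (rule ccontr)
  interpret finite_measure \<mu> by (rule fm)
  assume nt: "\<not> (\<exists>\<delta>>0. measure \<mu> {c + \<delta><..} > 0)"
  have z: "measure \<mu> {c + 1 / Suc n<..} = 0" for n
  proof -
    have "1 / real (Suc n) > 0" by simp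
    then have "\<not> measure \<mu> {c + 1 / Suc n<..} > 0" using nt by blast
    then show ?thesis using measure_nonneg[of \<mu> "{c + 1 / Suc n<..}"] by linarith
  qed
  have "emeasure \<mu> (\<Union>n. {c + 1 / Suc n<..}) = 0"
    by (rule emeasure_UN_eq_0) (use z in \<open>auto simp: emeasure_eq_measure\<close>)
  moreover have "(\<Union>n. {c + 1 / Suc n<..}) = {c<..}"
  proof (intro equalityI subsetI)
    fix x assume "x \<in> {c<..}"
    then obtain n where "1 / Suc n < x - c"
      by (metis diff_gt_0_iff_gt greaterThan_iff nat_approx_posE)
    then have "c + 1 / Suc n < x" by simp
    then show "x \<in> (\<Union>n. {c + 1 / Suc n<..})" by (auto intro!: exI[of _ n])
  next
    fix x assume "x \<in> (\<Union>n. {c + 1 / Suc n<..})"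
    then obtain n where "x \<in> {c + 1 / Suc n<..}" by blast
    moreover have "0 < 1 / real (Suc n)" by simp
    ultimately show "x \<in> {c<..}" by (smt (verit) greaterThan_iff)
  qed
  ultimately show False using assms by simp
qed

lemma to_infty:
  assumes "emeasure \<mu> {c<..} \<noteq> 0"
  shows "filterlim (\<lambda>z. \<integral>y. exp ((y - c) * z) \<partial>\<mu>) at_top at_top"
proof -
  obtain \<delta> where d: "\<delta> > 0" "measure \<mu> {c + \<delta><..} > 0" using pos_delta[OF assms] by blast
  have e: "filterlim (\<lambda>z. exp (\<delta> * z)) at_top at_top"
    by (rule filterlim_compose[OF exp_at_top filterlim_tendsto_pos_mult_at_top[OF tendsto_const d(1) filterlim_ident]])
  have "filterlim (\<lambda>z. measure \<mu> {c + \<delta><..} * exp (\<delta> * z)) at_top at_top"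
    by (rule filterlim_tendsto_pos_mult_at_top[OF tendsto_const d(2) e])
  then have "filterlim (\<lambda>z. exp (\<delta> * z) * measure \<mu> {c + \<delta><..}) at_top at_top"
    by (simp add: mult.commute)
  then show ?thesis
    by (rule filterlim_at_top_mono) (use lower[OF d(1)] in \<open>auto intro: eventually_mono[OF eventually_ge_at_top[of 0]]\<close>)
qed

lemma cont: "continuous_on {a..b} (\<lambda>z. \<integral>y. exp (y * z) \<partial>\<mu>)"
proof (rule continuous_on_sequentiallyI)
  fix u x assume u: "\<forall>n. u n \<in> {a..b}" "x \<in> {a..b}" "u \<longlonglongrightarrow> x"
  show "(\<lambda>n. \<integral>y. exp (y * u n) \<partial>\<mu>) \<longlonglongrightarrow> (\<integral>y. exp (y * x) \<partial>\<mu>)"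
  proof (rule integral_dominated_convergence[where w="\<lambda>y. exp (y * b)"])
    show "(\<lambda>y. exp (y * x)) \<in> borel_measurable \<mu>" by (intro meas) measurable
    show "(\<lambda>y. exp (y * u n)) \<in> borel_measurable \<mu>" for n by (intro meas) measurable
    show "integrable \<mu> (\<lambda>y. exp (y * b))" by (rule integ_exp)
    show "AE y in \<mu>. (\<lambda>n. exp (y * u n)) \<longlonglongrightarrow> exp (y * x)"
      by (intro AE_I2 tendsto_intros u)
    show "AE y in \<mu>. norm (exp (y * u n)) \<le> exp (y * b)" for n
      using AE_pos
    proof eventually_elim
      case (elim y)
      have "y * u n \<le> y * b" using u(1) elim by (intro mult_left_mono) auto
      then show ?case by simp
    qed
  qed
qed

end

theorem lemma2:
  fixes \<mu> :: "real measure"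
    and u ux uxx ut :: "real \<Rightarrow> real \<Rightarrow> real"
    and \<gamma> :: real
  assumes mu_borel: "sets \<mu> = sets borel"
    and mu_finite: "finite_measure \<mu>"
    and mu_support: "emeasure \<mu> {..0} = 0"
    and mu_nonzero: "emeasure \<mu> (space \<mu>) \<noteq> 0"
    and mu_exp_int: "\<And>z. integrable \<mu> (\<lambda>y. y * exp (y * z))"
    and u_x: "\<And>x t. 0 < x \<Longrightarrow> 0 \<le> t \<Longrightarrow> ((\<lambda>x'. u x' t) has_real_derivative ux x t) (at x)"
    and u_xx: "\<And>x t. 0 < x \<Longrightarrow> 0 \<le> t \<Longrightarrow> ((\<lambda>x'. ux x' t) has_real_derivative uxx x t) (at x)"
    and u_t: "\<And>x t. 0 < x \<Longrightarrow> 0 \<le> t \<Longrightarrow> ((\<lambda>t'. u x t') has_real_derivative ut x t) (at t within {0..})"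
    and u_incr: "\<And>t. 0 \<le> t \<Longrightarrow> strict_mono_on {0<..} (\<lambda>x. u x t)"
    and u_conc: "\<And>t. 0 \<le> t \<Longrightarrow> strictly_concave_on {0<..} (\<lambda>x. u x t)"
    and u_pde: "\<And>x t. 0 < x \<Longrightarrow> 0 \<le> t \<Longrightarrow> ut x t = (1/2) * (ux x t)\<^sup>2 / uxx x t"
    and u_h: "\<And>z t. 0 \<le> t \<Longrightarrow> ux (hfun \<mu> z t) t = exp (- z + t / 2)"
    and gamma: "\<gamma> < 1"
  shows "((\<lambda>x. ux x 0 / x powr (\<gamma> - 1)) \<longlongrightarrow> 1) at_top \<longleftrightarrow>
         (right_end \<mu> = ereal (1 / (1 - \<gamma>)) \<and> emeasure \<mu> {1 / (1 - \<gamma>)} = 1)"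
proof -
  interpret finite_measure \<mu> by (rule mu_finite)
  note A = mu_borel mu_finite mu_support mu_exp_int
  define c where "c = 1 / (1 - \<gamma>)"
  have c0: "c > 0" using gamma by (simp add: c_def)
  have cg: "c * (1 - \<gamma>) = 1" using gamma by (simp add: c_def)
  define h where "h = (\<lambda>z. \<integral>y. exp (y * z) \<partial>\<mu>)"
  define H where "H = (\<lambda>z. \<integral>y. exp ((y - c) * z) \<partial>\<mu>)"
  define F where "F = (\<lambda>x. ux x 0 / x powr (\<gamma> - 1))"
  define G where "G = (\<lambda>z. H z powr (1 - \<gamma>))"
  have hfun0: "hfun \<mu> z 0 = h z" for z by (simp add: hfun_def h_def)
  have uxh: "ux (h z) 0 = exp (- z)" for z using u_h[of 0 z] hfun0 by simp
  have hH: "h z = exp (c * z) * H z" for z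
  proof -
    have "H z * exp (c * z) = (\<integral>y. exp ((y - c) * z) * exp (c * z) \<partial>\<mu>)"
      by (simp add: H_def)
    also have "\<dots> = h z"
      by (simp add: h_def exp_add[symmetric] algebra_simps)
    finally show ?thesis by (metis mult.commute)
  qed
  have sp: "space \<mu> = UNIV" using sets_eq_imp_space_eq[OF mu_borel] by simp
  have pos0: "emeasure \<mu> {0<..} \<noteq> 0"
  proof
    assume z: "emeasure \<mu> {0<..} = 0"
    have "emeasure \<mu> (space \<mu>) = emeasure \<mu> ({..0} \<union> {0<..})"
      using sp by (metis (full_types) atMost_iff greaterThan_iff UNIV_eq_I UnCI not_le)
    also have "\<dots> \<le> emeasure \<mu> {..0} + emeasure \<mu> {0<..}"
      by (intro emeasure_subadditive) (auto simp: mu_borel)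
    finally show False using z mu_support mu_nonzero by simp
  qed
  have hinf: "filterlim h at_top at_top"
    using to_infty[OF A pos0] by (simp add: h_def)
  obtain \<delta>0 where d0: "\<delta>0 > 0" "measure \<mu> {0 + \<delta>0<..} > 0"
    using pos_delta[OF A pos0] by blast
  have hpos: "h z > 0" if "z \<ge> 0" for z
  proof -
    have "0 < exp (\<delta>0 * z) * measure \<mu> {0 + \<delta>0<..}" using d0 by simp
    also have "\<dots> \<le> h z" using lower[OF A d0(1) that, of 0] by (simp add: h_def)
    finally show ?thesis .
  qed
  have Hpos: "H z > 0" if "z \<ge> 0" for z
    using hpos[OF that] hH[of z] by (simp add: zero_less_mult_iff)
  have FG: "F (h z) = G z" if "z \<ge> 0" for z
  proof -
    have e: "exp (c * z) powr (\<gamma> - 1) = exp (- z)"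
    proof -
      have "exp (c * z) powr (\<gamma> - 1) = exp ((\<gamma> - 1) * (c * z))" by (simp add: powr_def)
      also have "(\<gamma> - 1) * (c * z) = - (c * (1 - \<gamma>)) * z" by (simp add: algebra_simps)
      also have "\<dots> = - z" using cg by simp
      finally show ?thesis .
    qed
    have "h z powr (\<gamma> - 1) = exp (- z) * H z powr (\<gamma> - 1)"
      using Hpos[OF that] by (simp add: hH powr_mult e)
    then have "F (h z) = exp (- z) / (exp (- z) * H z powr (\<gamma> - 1))"
      by (simp add: F_def uxh)
    also have "\<dots> = 1 / H z powr (\<gamma> - 1)" by simp
    also have "\<dots> = H z powr (1 - \<gamma>)"
      using Hpos[OF that] by (simp add: powr_minus_divide[symmetric])
    finally show ?thesis by (simp add: G_def)
  qed
  have QG: "(H \<longlongrightarrow> 1) at_top \<longleftrightarrow> (G \<longlongrightarrow> 1) at_top"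
  proof
    assume "(H \<longlongrightarrow> 1) at_top"
    from tendsto_powr[OF this tendsto_const[of "1 - \<gamma>"]] show "(G \<longlongrightarrow> 1) at_top"
      by (simp add: G_def)
  next
    assume "(G \<longlongrightarrow> 1) at_top"
    from tendsto_powr[OF this tendsto_const[of c]]
    have "((\<lambda>z. G z powr c) \<longlongrightarrow> 1) at_top" by simp
    moreover have "eventually (\<lambda>z. G z powr c = H z) at_top"
      using eventually_ge_at_top[of "0::real"]
    proof eventually_elim
      case (elim z)
      then show ?case using Hpos[OF elim] cg by (simp add: G_def powr_powr mult.commute)
    qed
    ultimately show "(H \<longlongrightarrow> 1) at_top" by (rule Lim_transform_eventually)
  qed
  have PG: "(F \<longlongrightarrow> 1) at_top \<longleftrightarrow> (G \<longlongrightarrow> 1) at_top"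
  proof
    assume "(F \<longlongrightarrow> 1) at_top"
    from filterlim_compose[OF this hinf]
    have "((\<lambda>z. F (h z)) \<longlongrightarrow> 1) at_top" .
    moreover have "eventually (\<lambda>z. F (h z) = G z) at_top"
      using eventually_ge_at_top[of "0::real"] by eventually_elim (rule FG)
    ultimately show "(G \<longlongrightarrow> 1) at_top" by (rule Lim_transform_eventually)
  next
    assume G: "(G \<longlongrightarrow> 1) at_top"
    show "(F \<longlongrightarrow> 1) at_top"
      unfolding tendsto_iff
    proof (intro allI impI)
      fix e :: real assume "e > 0"
      with G have "eventually (\<lambda>z. dist (G z) 1 < e) at_top" by (simp add: tendsto_iff)
      then obtain Z0 where Z0: "\<And>z. z \<ge> Z0 \<Longrightarrow> dist (G z) 1 < e"
        by (auto simp: eventually_at_top_linorder)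
      define Z where "Z = max Z0 0"
      show "eventually (\<lambda>x. dist (F x) 1 < e) at_top"
        unfolding eventually_at_top_linorder
      proof (intro exI allI impI)
        fix x assume x: "x \<ge> h Z"
        from hinf have "eventually (\<lambda>z. x \<le> h z) at_top" by (simp add: filterlim_at_top)
        then obtain Z1 where Z1: "\<And>z. z \<ge> Z1 \<Longrightarrow> x \<le> h z"
          by (auto simp: eventually_at_top_linorder)
        define b where "b = max Z Z1"
        have "\<exists>z. Z \<le> z \<and> z \<le> b \<and> h z = x"
        proof (rule IVT')
          show "h Z \<le> x" by (rule x)
          show "x \<le> h b" by (rule Z1) (simp add: b_def)
          show "Z \<le> b" by (simp add: b_def)
          show "continuous_on {Z..b} h" unfolding h_def by (rule cont[OF A])
        qed
        then obtain z where z: "Z \<le> z" "h z = x" by blast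
        have "F x = G z" using FG[of z] z by (simp add: Z_def)
        then show "dist (F x) 1 < e" using Z0[of z] z by (simp add: Z_def)
      qed
    qed
  qed
  have QR: "(H \<longlongrightarrow> 1) at_top \<longleftrightarrow> (right_end \<mu> = ereal c \<and> emeasure \<mu> {c} = 1)"
  proof
    assume Q: "(H \<longlongrightarrow> 1) at_top"
    have null: "emeasure \<mu> {c<..} = 0"
    proof (rule ccontr)
      assume "emeasure \<mu> {c<..} \<noteq> 0"
      from to_infty[OF A this] have "filterlim H at_top at_top" by (simp add: H_def)
      then have ev1: "eventually (\<lambda>z. H z \<ge> 2) at_top" by (simp add: filterlim_at_top)
      have ev2: "eventually (\<lambda>z. H z < 2) at_top" using order_tendstoD(2)[OF Q] by simp
      obtain N1 where N1: "\<And>z. z \<ge> N1 \<Longrightarrow> H z \<ge> 2" using ev1 by (auto simp: eventually_at_top_linorder)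
      obtain N2 where N2: "\<And>z. z \<ge> N2 \<Longrightarrow> H z < 2" using ev2 by (auto simp: eventually_at_top_linorder)
      show False using N1[of "max N1 N2"] N2[of "max N1 N2"] by simp
    qed
    from lim_A[OF A null] have "(H \<longlongrightarrow> measure \<mu> {c}) at_top" by (simp add: H_def)
    with Q have m1: "measure \<mu> {c} = 1" using tendsto_unique[OF trivial_limit_at_top_linorder] by metis
    then have e1: "emeasure \<mu> {c} = 1" by (simp add: emeasure_eq_measure)
    have S: "{y. 0 < y \<and> emeasure \<mu> {y<..} = 0} = {c..}"
    proof (intro equalityI subsetI)
      fix y assume "y \<in> {y. 0 < y \<and> emeasure \<mu> {y<..} = 0}"
      then have y: "emeasure \<mu> {y<..} = 0" by simp
      show "y \<in> {c..}"
      proof (rule ccontr)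
        assume "y \<notin> {c..}"
        then have "{c} \<subseteq> {y<..}" by auto
        then have "emeasure \<mu> {c} \<le> emeasure \<mu> {y<..}" by (intro emeasure_mono) (auto simp: mu_borel)
        then show False using y e1 by simp
      qed
    next
      fix y assume "y \<in> {c..}"
      then have "{y<..} \<subseteq> {c<..}" by auto
      then have "emeasure \<mu> {y<..} \<le> emeasure \<mu> {c<..}" by (intro emeasure_mono) (auto simp: mu_borel)
      then show "y \<in> {y. 0 < y \<and> emeasure \<mu> {y<..} = 0}" using null c0 \<open>y \<in> {c..}\<close> by simp
    qed
    have "right_end \<mu> = ereal c"
      unfolding right_end_def S by (rule antisym) (auto intro: Inf_lower Inf_greatest)
    then show "right_end \<mu> = ereal c \<and> emeasure \<mu> {c} = 1" using e1 by simp
  next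
    assume R: "right_end \<mu> = ereal c \<and> emeasure \<mu> {c} = 1"
    have null: "emeasure \<mu> {c<..} = 0"
    proof (rule ccontr)
      assume "emeasure \<mu> {c<..} \<noteq> 0"
      from pos_delta[OF A this] obtain \<delta> where d: "\<delta> > 0" "measure \<mu> {c + \<delta><..} > 0" by blast
      have "Inf (ereal ` {y. 0 < y \<and> emeasure \<mu> {y<..} = 0}) < ereal (c + \<delta>)"
        using R d(1) unfolding right_end_def by simp
      then obtain s where s: "0 < s" "emeasure \<mu> {s<..} = 0" "s < c + \<delta>"
        by (auto simp: Inf_less_iff)
      have "measure \<mu> {c + \<delta><..} \<le> measure \<mu> {s<..}"
        using s by (intro finite_measure_mono) (auto simp: mu_borel)
      also have "\<dots> = 0" using s by (simp add: measure_def)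
      finally show False using d by simp
    qed
    from lim_A[OF A null] have "(H \<longlongrightarrow> measure \<mu> {c}) at_top" by (simp add: H_def)
    moreover have "measure \<mu> {c} = 1" using R by (simp add: measure_def)
    ultimately show "(H \<longlongrightarrow> 1) at_top" by simp
  qed
  have "(\<lambda>x. ux x 0 / x powr (\<gamma> - 1)) = F" by (simp add: F_def)
  then show ?thesis using PG QG QR by (simp add: c_def)
qed

end
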